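(* Let $\mathcal C,\mathcal D$ be strict monoidal categories, $F:\mathcal D\to\mathcal C$ a strong comonoidal functor with a left adjoint $\overline F:\mathcal C\to\mathcal D$, where $\overline F$ is equipped with a comonoidal structure $(\overline F^2,\overline F^0)$ such that the adjunction is comonoidal (i.e. its unit $\eta:\mathrm{Id}_{\mathcal C}\to F\overline F$ and counit are comonoidal transformations). Let $G$ be a comonoidal endofunctor of $\mathcal D$ and $(X,\gamma_X)\in\mathcal Z^G_{\mathrm{lax}}(\mathcal D)$. Define, for $V\in\mathcal C$, $$\gamma_{FX,V}:=F^2(G\overline F V,X)\circ F(\gamma_{X,\overline F V})\circ F^{-2}(X,\overline FV)\circ(FX\otimes\eta_V):FX\otimes V\to (FG\overline F)(V)\otimes FX.$$ Then $\gamma_{FX}$ is a lax $(FG\overline F)$-half-braiding on $FX$ (with $FG\overline F$ carrying the composite comonoidal structure), and $F_*:(X,\gamma_X)\mapsto(FX,\gamma_{FX})$, $f\mapsto F(f)$ defines a functor $F_*:\mathcal Z^G_{\mathrm{lax}}(\mathcal D)\to\mathcal Z^{FG\overline F}_{\mathrm{lax}}(\mathcal C)$.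
   Context: All monoidal categories are strict. A comonoidal functor is a triple $(F,F^2,F^0)$ with $F^0:F(\mathbf 1)\to\mathbf 1$ and $F^2(X,Y):F(X\otimes Y)\to FX\otimes FY$ natural, satisfying $(F^2(X,Y)\otimes FZ)F^2(X\otimes Y,Z)=(FX\otimes F^2(Y,Z))F^2(X,Y\otimes Z)$ and $(FX\otimes F^0)F^2(X,\mathbf 1)=\mathrm{id}=(F^0\otimes FX)F^2(\mathbf 1,X)$; it is strong if $F^2,F^0$ are invertible, and $F^{-2}$ denotes the inverse of $F^2$. Composite comonoidal structure: $(GF)^2(X,Y)=G^2(FX,FY)\circ G(F^2(X,Y))$, $(GF)^0=G^0\circ G(F^0)$. A comonoidal transformation $\alpha:F\to K$ satisfies $(\alpha_X\otimes\alpha_Y)F^2(X,Y)=K^2(X,Y)\alpha_{X\otimes Y}$ and $K^0\alpha_{\mathbf 1}=F^0$. For a comonoidal endofunctor $F$ of $\mathcal C$, a lax $F$-half-braiding on $X$ is a family $\gamma_{X,V}:X\otimes V\to FV\otimes X$ natural in $V$ with $(F^2(V,W)\otimes X)\gamma_{X,V\otimes W}=(FV\otimes\gamma_{X,W})(\gamma_{X,V}\otimes W)$ and $(F^0\otimes X)\gamma_{X,\mathbf 1}=\mathrm{id}_X$. $\mathcal Z^F_{\mathrm{lax}}(\mathcal C)$ is the category of pairs $(X,\gamma_X)$ with morphisms those $f:X_1\to X_2$ in $\mathcal C$ satisfying $(FV\otimes f)\gamma_{X_1,V}=\gamma_{X_2,V}(f\otimes V)$ for all $V$. *)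

theory Defs
  imports Main
begin

text \<open>Categories are given explicitly by carriers of objects and arrows
  (types 'o and 'm), domain, codomain, identities, composition
  (Cmp C g f means g after f), together with a tensor product on objects and
  arrows and a unit object.\<close>

record ('o,'m) moncat =
  Ob  :: "'o set"
  Ar  :: "'m set"
  Dm  :: "'m \<Rightarrow> 'o"
  Cd  :: "'m \<Rightarrow> 'o"
  Idm :: "'o \<Rightarrow> 'm"
  Cmp :: "'m \<Rightarrow> 'm \<Rightarrow> 'm"
  Tn  :: "'o \<Rightarrow> 'o \<Rightarrow> 'o"
  TnM :: "'m \<Rightarrow> 'm \<Rightarrow> 'm"
  UnitOb  :: "'o"

definition hom :: "('o,'m) moncat \<Rightarrow> 'o \<Rightarrow> 'o \<Rightarrow> 'm set" where
  "hom C A B = {f \<in> Ar C. Dm C f = A \<and> Cd C f = B}"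

definition strict_monoidal_category :: "('o,'m) moncat \<Rightarrow> bool" where
  "strict_monoidal_category C \<longleftrightarrow>
     (\<forall>f\<in>Ar C. Dm C f \<in> Ob C \<and> Cd C f \<in> Ob C) \<and>
     (\<forall>A\<in>Ob C. Idm C A \<in> hom C A A) \<and>
     (\<forall>f\<in>Ar C. \<forall>g\<in>Ar C. Dm C g = Cd C f \<longrightarrow> Cmp C g f \<in> hom C (Dm C f) (Cd C g)) \<and>
     (\<forall>f\<in>Ar C. Cmp C (Idm C (Cd C f)) f = f \<and> Cmp C f (Idm C (Dm C f)) = f) \<and>
     (\<forall>f\<in>Ar C. \<forall>g\<in>Ar C. \<forall>h\<in>Ar C. Dm C g = Cd C f \<longrightarrow> Dm C h = Cd C g \<longrightarrow>
        Cmp C h (Cmp C g f) = Cmp C (Cmp C h g) f) \<and>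
     UnitOb C \<in> Ob C \<and>
     (\<forall>A\<in>Ob C. \<forall>B\<in>Ob C. Tn C A B \<in> Ob C) \<and>
     (\<forall>f\<in>Ar C. \<forall>g\<in>Ar C.
        TnM C f g \<in> hom C (Tn C (Dm C f) (Dm C g)) (Tn C (Cd C f) (Cd C g))) \<and>
     (\<forall>A\<in>Ob C. \<forall>B\<in>Ob C. TnM C (Idm C A) (Idm C B) = Idm C (Tn C A B)) \<and>
     (\<forall>f\<in>Ar C. \<forall>g\<in>Ar C. \<forall>f'\<in>Ar C. \<forall>g'\<in>Ar C.
        Dm C g = Cd C f \<longrightarrow> Dm C g' = Cd C f' \<longrightarrow>
        TnM C (Cmp C g f) (Cmp C g' f') = Cmp C (TnM C g g') (TnM C f f')) \<and>
     (\<forall>A\<in>Ob C. \<forall>B\<in>Ob C. \<forall>E\<in>Ob C. Tn C (Tn C A B) E = Tn C A (Tn C B E)) \<and>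
     (\<forall>A\<in>Ob C. Tn C (UnitOb C) A = A \<and> Tn C A (UnitOb C) = A) \<and>
     (\<forall>f\<in>Ar C. \<forall>g\<in>Ar C. \<forall>h\<in>Ar C. TnM C (TnM C f g) h = TnM C f (TnM C g h)) \<and>
     (\<forall>f\<in>Ar C. TnM C (Idm C (UnitOb C)) f = f \<and> TnM C f (Idm C (UnitOb C)) = f)"

definition iso :: "('o,'m) moncat \<Rightarrow> 'm \<Rightarrow> bool" where
  "iso C f \<longleftrightarrow> f \<in> Ar C \<and> (\<exists>g\<in>hom C (Cd C f) (Dm C f).
      Cmp C g f = Idm C (Dm C f) \<and> Cmp C f g = Idm C (Cd C f))"

text \<open>A functor between such categories together with (candidate) comonoidal
  structure maps F2 X Y : F(X (x) Y) -> FX (x) FY and F0 : F(1) -> 1.\<close>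

record ('a,'b,'c,'d) cmf =
  cfo :: "'a \<Rightarrow> 'c"
  cfm :: "'b \<Rightarrow> 'd"
  cf2 :: "'a \<Rightarrow> 'a \<Rightarrow> 'd"
  cf0 :: "'d"

definition is_functor :: "('a,'b) moncat \<Rightarrow> ('c,'d) moncat \<Rightarrow> ('a,'b,'c,'d) cmf \<Rightarrow> bool" where
  "is_functor C D F \<longleftrightarrow>
     (\<forall>A\<in>Ob C. cfo F A \<in> Ob D) \<and>
     (\<forall>A\<in>Ob C. \<forall>B\<in>Ob C. \<forall>f\<in>hom C A B. cfm F f \<in> hom D (cfo F A) (cfo F B)) \<and>
     (\<forall>A\<in>Ob C. cfm F (Idm C A) = Idm D (cfo F A)) \<and>
     (\<forall>f\<in>Ar C. \<forall>g\<in>Ar C. Dm C g = Cd C f \<longrightarrow> cfm F (Cmp C g f) = Cmp D (cfm F g) (cfm F f))"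

definition comonoidal_functor :: "('a,'b) moncat \<Rightarrow> ('c,'d) moncat \<Rightarrow> ('a,'b,'c,'d) cmf \<Rightarrow> bool" where
  "comonoidal_functor C D F \<longleftrightarrow>
     is_functor C D F \<and>
     (\<forall>X\<in>Ob C. \<forall>Y\<in>Ob C. cf2 F X Y \<in> hom D (cfo F (Tn C X Y)) (Tn D (cfo F X) (cfo F Y))) \<and>
     cf0 F \<in> hom D (cfo F (UnitOb C)) (UnitOb D) \<and>
     (\<forall>f\<in>Ar C. \<forall>g\<in>Ar C.
        Cmp D (TnM D (cfm F f) (cfm F g)) (cf2 F (Dm C f) (Dm C g))
        = Cmp D (cf2 F (Cd C f) (Cd C g)) (cfm F (TnM C f g))) \<and>
     (\<forall>X\<in>Ob C. \<forall>Y\<in>Ob C. \<forall>Z\<in>Ob C.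
        Cmp D (TnM D (cf2 F X Y) (Idm D (cfo F Z))) (cf2 F (Tn C X Y) Z)
        = Cmp D (TnM D (Idm D (cfo F X)) (cf2 F Y Z)) (cf2 F X (Tn C Y Z))) \<and>
     (\<forall>X\<in>Ob C.
        Cmp D (TnM D (Idm D (cfo F X)) (cf0 F)) (cf2 F X (UnitOb C)) = Idm D (cfo F X) \<and>
        Cmp D (TnM D (cf0 F) (Idm D (cfo F X))) (cf2 F (UnitOb C) X) = Idm D (cfo F X))"

definition strong_with_inverse ::
  "('a,'b) moncat \<Rightarrow> ('c,'d) moncat \<Rightarrow> ('a,'b,'c,'d) cmf \<Rightarrow> ('a \<Rightarrow> 'a \<Rightarrow> 'd) \<Rightarrow> bool" where
  "strong_with_inverse C D F Finv2 \<longleftrightarrow>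
     iso D (cf0 F) \<and>
     (\<forall>X\<in>Ob C. \<forall>Y\<in>Ob C.
        Finv2 X Y \<in> hom D (Tn D (cfo F X) (cfo F Y)) (cfo F (Tn C X Y)) \<and>
        Cmp D (Finv2 X Y) (cf2 F X Y) = Idm D (cfo F (Tn C X Y)) \<and>
        Cmp D (cf2 F X Y) (Finv2 X Y) = Idm D (Tn D (cfo F X) (cfo F Y)))"

definition cmf_id :: "('a,'b) moncat \<Rightarrow> ('a,'b,'a,'b) cmf" where
  "cmf_id C = \<lparr>cfo = id, cfm = id, cf2 = (\<lambda>X Y. Idm C (Tn C X Y)), cf0 = Idm C (UnitOb C)\<rparr>"

definition cmf_comp :: "('e,'f) moncat \<Rightarrow> ('c,'d,'e,'f) cmf \<Rightarrow> ('a,'b,'c,'d) cmf \<Rightarrow> ('a,'b,'e,'f) cmf" where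
  "cmf_comp E G F = \<lparr>cfo = cfo G \<circ> cfo F, cfm = cfm G \<circ> cfm F,
      cf2 = (\<lambda>X Y. Cmp E (cf2 G (cfo F X) (cfo F Y)) (cfm G (cf2 F X Y))),
      cf0 = Cmp E (cf0 G) (cfm G (cf0 F))\<rparr>"

definition nat_trans ::
  "('a,'b) moncat \<Rightarrow> ('c,'d) moncat \<Rightarrow> ('a,'b,'c,'d) cmf \<Rightarrow> ('a,'b,'c,'d) cmf \<Rightarrow> ('a \<Rightarrow> 'd) \<Rightarrow> bool" where
  "nat_trans C D F K \<alpha> \<longleftrightarrow>
     (\<forall>A\<in>Ob C. \<alpha> A \<in> hom D (cfo F A) (cfo K A)) \<and>
     (\<forall>f\<in>Ar C. Cmp D (\<alpha> (Cd C f)) (cfm F f) = Cmp D (cfm K f) (\<alpha> (Dm C f)))"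

definition comonoidal_transformation ::
  "('a,'b) moncat \<Rightarrow> ('c,'d) moncat \<Rightarrow> ('a,'b,'c,'d) cmf \<Rightarrow> ('a,'b,'c,'d) cmf \<Rightarrow> ('a \<Rightarrow> 'd) \<Rightarrow> bool" where
  "comonoidal_transformation C D F K \<alpha> \<longleftrightarrow>
     nat_trans C D F K \<alpha> \<and>
     (\<forall>X\<in>Ob C. \<forall>Y\<in>Ob C.
        Cmp D (TnM D (\<alpha> X) (\<alpha> Y)) (cf2 F X Y) = Cmp D (cf2 K X Y) (\<alpha> (Tn C X Y))) \<and>
     Cmp D (cf0 K) (\<alpha> (UnitOb C)) = cf0 F"

definition adjunction ::
  "('a,'b) moncat \<Rightarrow> ('c,'d) moncat \<Rightarrow> ('a,'b,'c,'d) cmf \<Rightarrow> ('c,'d,'a,'b) cmf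
     \<Rightarrow> ('a \<Rightarrow> 'b) \<Rightarrow> ('c \<Rightarrow> 'd) \<Rightarrow> bool" where
  "adjunction C D Fb F \<eta> \<epsilon> \<longleftrightarrow>
     is_functor C D Fb \<and> is_functor D C F \<and>
     nat_trans C C (cmf_id C) (cmf_comp C F Fb) \<eta> \<and>
     nat_trans D D (cmf_comp D Fb F) (cmf_id D) \<epsilon> \<and>
     (\<forall>X\<in>Ob D. Cmp C (cfm F (\<epsilon> X)) (\<eta> (cfo F X)) = Idm C (cfo F X)) \<and>
     (\<forall>V\<in>Ob C. Cmp D (\<epsilon> (cfo Fb V)) (cfm Fb (\<eta> V)) = Idm D (cfo Fb V))"

definition lax_half_braiding ::
  "('a,'b) moncat \<Rightarrow> ('a,'b,'a,'b) cmf \<Rightarrow> 'a \<Rightarrow> ('a \<Rightarrow> 'b) \<Rightarrow> bool" where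
  "lax_half_braiding C H X \<gamma> \<longleftrightarrow>
     X \<in> Ob C \<and>
     (\<forall>V\<in>Ob C. \<gamma> V \<in> hom C (Tn C X V) (Tn C (cfo H V) X)) \<and>
     (\<forall>v\<in>Ar C. Cmp C (\<gamma> (Cd C v)) (TnM C (Idm C X) v)
                = Cmp C (TnM C (cfm H v) (Idm C X)) (\<gamma> (Dm C v))) \<and>
     (\<forall>V\<in>Ob C. \<forall>W\<in>Ob C.
        Cmp C (TnM C (cf2 H V W) (Idm C X)) (\<gamma> (Tn C V W))
        = Cmp C (TnM C (Idm C (cfo H V)) (\<gamma> W)) (TnM C (\<gamma> V) (Idm C W))) \<and>
     Cmp C (TnM C (cf0 H) (Idm C X)) (\<gamma> (UnitOb C)) = Idm C X"

definition lax_Z_mor ::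
  "('a,'b) moncat \<Rightarrow> ('a,'b,'a,'b) cmf \<Rightarrow> 'a \<Rightarrow> ('a \<Rightarrow> 'b) \<Rightarrow> 'a \<Rightarrow> ('a \<Rightarrow> 'b) \<Rightarrow> 'b \<Rightarrow> bool" where
  "lax_Z_mor C H X1 \<gamma>1 X2 \<gamma>2 f \<longleftrightarrow>
     f \<in> hom C X1 X2 \<and>
     (\<forall>V\<in>Ob C. Cmp C (TnM C (Idm C (cfo H V)) f) (\<gamma>1 V) = Cmp C (\<gamma>2 V) (TnM C f (Idm C V)))"

definition induced_gamma ::
  "('a,'b) moncat \<Rightarrow> ('c,'d,'a,'b) cmf \<Rightarrow> ('c \<Rightarrow> 'c \<Rightarrow> 'b) \<Rightarrow> ('a,'b,'c,'d) cmf
     \<Rightarrow> ('c,'d,'c,'d) cmf \<Rightarrow> ('a \<Rightarrow> 'b) \<Rightarrow> 'c \<Rightarrow> ('c \<Rightarrow> 'd) \<Rightarrow> 'a \<Rightarrow> 'b" where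
  "induced_gamma C F Finv2 Fb G \<eta> X \<gamma> V =
     Cmp C (cf2 F (cfo G (cfo Fb V)) X)
       (Cmp C (cfm F (\<gamma> (cfo Fb V)))
          (Cmp C (Finv2 X (cfo Fb V)) (TnM C (Idm C (cfo F X)) (\<eta> V))))"

end

theory Submission
  imports Defs
begin


locale smc = fixes C :: "('o,'m) moncat" assumes smc: "strict_monoidal_category C"
begin

lemmas F1 = smc[unfolded strict_monoidal_category_def, THEN conjunct1]
lemmas F2 = smc[unfolded strict_monoidal_category_def, THEN conjunct2, THEN conjunct1]
lemmas F3 = smc[unfolded strict_monoidal_category_def, THEN conjunct2, THEN conjunct2, THEN conjunct1]
lemmas F4 = smc[unfolded strict_monoidal_category_def, THEN conjunct2, THEN conjunct2, THEN conjunct2, THEN conjunct1]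
lemmas F5 = smc[unfolded strict_monoidal_category_def, THEN conjunct2, THEN conjunct2, THEN conjunct2, THEN conjunct2, THEN conjunct1]
lemmas F6 = smc[unfolded strict_monoidal_category_def, THEN conjunct2, THEN conjunct2, THEN conjunct2, THEN conjunct2, THEN conjunct2, THEN conjunct1]
lemmas F7 = smc[unfolded strict_monoidal_category_def, THEN conjunct2, THEN conjunct2, THEN conjunct2, THEN conjunct2, THEN conjunct2, THEN conjunct2, THEN conjunct1]
lemmas F8 = smc[unfolded strict_monoidal_category_def, THEN conjunct2, THEN conjunct2, THEN conjunct2, THEN conjunct2, THEN conjunct2, THEN conjunct2, THEN conjunct2, THEN conjunct1]
lemmas F9 = smc[unfolded strict_monoidal_category_def, THEN conjunct2, THEN conjunct2, THEN conjunct2, THEN conjunct2, THEN conjunct2, THEN conjunct2, THEN conjunct2, THEN conjunct2, THEN conjunct1]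
lemmas F10 = smc[unfolded strict_monoidal_category_def, THEN conjunct2, THEN conjunct2, THEN conjunct2, THEN conjunct2, THEN conjunct2, THEN conjunct2, THEN conjunct2, THEN conjunct2, THEN conjunct2, THEN conjunct1]
lemmas F11 = smc[unfolded strict_monoidal_category_def, THEN conjunct2, THEN conjunct2, THEN conjunct2, THEN conjunct2, THEN conjunct2, THEN conjunct2, THEN conjunct2, THEN conjunct2, THEN conjunct2, THEN conjunct2, THEN conjunct1]
lemmas F12 = smc[unfolded strict_monoidal_category_def, THEN conjunct2, THEN conjunct2, THEN conjunct2, THEN conjunct2, THEN conjunct2, THEN conjunct2, THEN conjunct2, THEN conjunct2, THEN conjunct2, THEN conjunct2, THEN conjunct2, THEN conjunct1]
lemmas F13 = smc[unfolded strict_monoidal_category_def, THEN conjunct2, THEN conjunct2, THEN conjunct2, THEN conjunct2, THEN conjunct2, THEN conjunct2, THEN conjunct2, THEN conjunct2, THEN conjunct2, THEN conjunct2, THEN conjunct2, THEN conjunct2, THEN conjunct1]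
lemmas F14 = smc[unfolded strict_monoidal_category_def, THEN conjunct2, THEN conjunct2, THEN conjunct2, THEN conjunct2, THEN conjunct2, THEN conjunct2, THEN conjunct2, THEN conjunct2, THEN conjunct2, THEN conjunct2, THEN conjunct2, THEN conjunct2, THEN conjunct2]

lemma Dm_Ob[simp]: "f\<in>Ar C \<Longrightarrow> Dm C f \<in> Ob C" using F1 by blast
lemma Cd_Ob[simp]: "f\<in>Ar C \<Longrightarrow> Cd C f \<in> Ob C" using F1 by blast
lemma Idm_Ar[simp]: "A\<in>Ob C \<Longrightarrow> Idm C A \<in> Ar C" using F2 unfolding hom_def by blast
lemma Dm_Idm[simp]: "A\<in>Ob C \<Longrightarrow> Dm C (Idm C A) = A" using F2 unfolding hom_def by blast
lemma Cd_Idm[simp]: "A\<in>Ob C \<Longrightarrow> Cd C (Idm C A) = A" using F2 unfolding hom_def by blast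
lemma Cmp_Ar[simp]: "f\<in>Ar C \<Longrightarrow> g\<in>Ar C \<Longrightarrow> Dm C g = Cd C f \<Longrightarrow> Cmp C g f \<in> Ar C"
  using F3 unfolding hom_def by blast
lemma Dm_Cmp[simp]: "f\<in>Ar C \<Longrightarrow> g\<in>Ar C \<Longrightarrow> Dm C g = Cd C f \<Longrightarrow> Dm C (Cmp C g f) = Dm C f"
  using F3 unfolding hom_def by blast
lemma Cd_Cmp[simp]: "f\<in>Ar C \<Longrightarrow> g\<in>Ar C \<Longrightarrow> Dm C g = Cd C f \<Longrightarrow> Cd C (Cmp C g f) = Cd C g"
  using F3 unfolding hom_def by blast
lemma idl[simp]: "f\<in>Ar C \<Longrightarrow> Cd C f = B \<Longrightarrow> Cmp C (Idm C B) f = f" using F4 by blast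
lemma idr[simp]: "f\<in>Ar C \<Longrightarrow> Dm C f = B \<Longrightarrow> Cmp C f (Idm C B) = f" using F4 by blast
lemma assoc[simp]: "f\<in>Ar C \<Longrightarrow> g\<in>Ar C \<Longrightarrow> h\<in>Ar C \<Longrightarrow> Dm C g = Cd C f \<Longrightarrow> Dm C h = Cd C g \<Longrightarrow>
        Cmp C (Cmp C h g) f = Cmp C h (Cmp C g f)" using F5 by metis
lemma Unit_Ob[simp]: "UnitOb C \<in> Ob C" using F6 .
lemma Tn_Ob[simp]: "A\<in>Ob C \<Longrightarrow> B\<in>Ob C \<Longrightarrow> Tn C A B \<in> Ob C" using F7 by blast
lemma TnM_Ar[simp]: "f\<in>Ar C \<Longrightarrow> g\<in>Ar C \<Longrightarrow> TnM C f g \<in> Ar C" using F8 unfolding hom_def by blast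
lemma Dm_TnM[simp]: "f\<in>Ar C \<Longrightarrow> g\<in>Ar C \<Longrightarrow> Dm C (TnM C f g) = Tn C (Dm C f) (Dm C g)" using F8 unfolding hom_def by blast
lemma Cd_TnM[simp]: "f\<in>Ar C \<Longrightarrow> g\<in>Ar C \<Longrightarrow> Cd C (TnM C f g) = Tn C (Cd C f) (Cd C g)" using F8 unfolding hom_def by blast
lemma TnM_Idm[simp]: "A\<in>Ob C \<Longrightarrow> B\<in>Ob C \<Longrightarrow> TnM C (Idm C A) (Idm C B) = Idm C (Tn C A B)" using F9 by blast
lemma interchange: "f\<in>Ar C \<Longrightarrow> g\<in>Ar C \<Longrightarrow> f'\<in>Ar C \<Longrightarrow> g'\<in>Ar C \<Longrightarrow>
        Dm C g = Cd C f \<Longrightarrow> Dm C g' = Cd C f' \<Longrightarrow>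
        TnM C (Cmp C g f) (Cmp C g' f') = Cmp C (TnM C g g') (TnM C f f')" using F10 by blast
lemma Tn_assoc[simp]: "A\<in>Ob C \<Longrightarrow> B\<in>Ob C \<Longrightarrow> E\<in>Ob C \<Longrightarrow> Tn C (Tn C A B) E = Tn C A (Tn C B E)" using F11 by blast
lemma Tn_unitl[simp]: "A\<in>Ob C \<Longrightarrow> Tn C (UnitOb C) A = A" using F12 by blast
lemma Tn_unitr[simp]: "A\<in>Ob C \<Longrightarrow> Tn C A (UnitOb C) = A" using F12 by blast
lemma TnM_assoc[simp]: "f\<in>Ar C \<Longrightarrow> g\<in>Ar C \<Longrightarrow> h\<in>Ar C \<Longrightarrow> TnM C (TnM C f g) h = TnM C f (TnM C g h)" using F13 by blast
lemma TnM_unitl[simp]: "f\<in>Ar C \<Longrightarrow> TnM C (Idm C (UnitOb C)) f = f" using F14 by blast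
lemma TnM_unitr[simp]: "f\<in>Ar C \<Longrightarrow> TnM C f (Idm C (UnitOb C)) = f" using F14 by blast

lemma whisk_r[simp]: "f\<in>Ar C \<Longrightarrow> g\<in>Ar C \<Longrightarrow> Dm C g = Cd C f \<Longrightarrow> A \<in> Ob C \<Longrightarrow>
   TnM C (Cmp C g f) (Idm C A) = Cmp C (TnM C g (Idm C A)) (TnM C f (Idm C A))"
  using interchange[of f g "Idm C A" "Idm C A"] by simp
lemma whisk_l[simp]: "f\<in>Ar C \<Longrightarrow> g\<in>Ar C \<Longrightarrow> Dm C g = Cd C f \<Longrightarrow> A \<in> Ob C \<Longrightarrow>
   TnM C (Idm C A) (Cmp C g f) = Cmp C (TnM C (Idm C A) g) (TnM C (Idm C A) f)"
  using interchange[of "Idm C A" "Idm C A" f g] by simp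
lemma idmerge[simp]: "A\<in>Ob C \<Longrightarrow> B\<in>Ob C \<Longrightarrow> f\<in>Ar C \<Longrightarrow> TnM C (Idm C A) (TnM C (Idm C B) f) = TnM C (Idm C (Tn C A B)) f"
  using TnM_assoc[of "Idm C A" "Idm C B" f] by simp

lemma tensor_split1: "f\<in>Ar C \<Longrightarrow> g\<in>Ar C \<Longrightarrow> TnM C f g = Cmp C (TnM C (Idm C (Cd C f)) g) (TnM C f (Idm C (Dm C g)))"
  using interchange[of f "Idm C (Cd C f)" "Idm C (Dm C g)" g] by simp
lemma tensor_split2: "f\<in>Ar C \<Longrightarrow> g\<in>Ar C \<Longrightarrow> TnM C f g = Cmp C (TnM C f (Idm C (Cd C g))) (TnM C (Idm C (Dm C f)) g)"
  using interchange[of "Idm C (Dm C f)" f g "Idm C (Cd C g)"] by simp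

lemma ctx: "Cmp C g f = Cmp C g' f' \<Longrightarrow> f\<in>Ar C \<Longrightarrow> g\<in>Ar C \<Longrightarrow> f'\<in>Ar C \<Longrightarrow> g'\<in>Ar C \<Longrightarrow>
   Dm C g = Cd C f \<Longrightarrow> Dm C g' = Cd C f' \<Longrightarrow> k\<in>Ar C \<Longrightarrow> Cd C k = Dm C f \<Longrightarrow>
   Cmp C g (Cmp C f k) = Cmp C g' (Cmp C f' k)"
proof -
  assume a: "Cmp C g f = Cmp C g' f'" "f\<in>Ar C" "g\<in>Ar C" "f'\<in>Ar C" "g'\<in>Ar C"
   "Dm C g = Cd C f" "Dm C g' = Cd C f'" "k\<in>Ar C" "Cd C k = Dm C f"
  have "Dm C f' = Dm C f" using a Dm_Cmp[of f g] Dm_Cmp[of f' g'] by metis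
  have "Cmp C (Cmp C g f) k = Cmp C g (Cmp C f k)" using a by (intro assoc) auto
  moreover have "Cmp C (Cmp C g' f') k = Cmp C g' (Cmp C f' k)" using a \<open>Dm C f' = Dm C f\<close> by (intro assoc) auto
  ultimately show ?thesis using a(1) by metis
qed

lemma ctx_id: "Cmp C g f = Idm C B \<Longrightarrow> B \<in> Ob C \<Longrightarrow> f\<in>Ar C \<Longrightarrow> g\<in>Ar C \<Longrightarrow>
   Dm C g = Cd C f \<Longrightarrow> k\<in>Ar C \<Longrightarrow> Cd C k = Dm C f \<Longrightarrow>
   Cmp C g (Cmp C f k) = k"
proof -
  assume a: "Cmp C g f = Idm C B" "B \<in> Ob C" "f\<in>Ar C" "g\<in>Ar C" "Dm C g = Cd C f" "k\<in>Ar C" "Cd C k = Dm C f"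
  have "Dm C f = B" using a Dm_Cmp[of f g] Dm_Idm[of B] by metis
  have "Cmp C (Cmp C g f) k = Cmp C g (Cmp C f k)" using a by (intro assoc) auto
  moreover have "Cmp C (Idm C B) k = k" using a \<open>Dm C f = B\<close> by simp
  ultimately show ?thesis using a(1) by metis
qed

lemma inverse_unique: "a\<in>Ar C \<Longrightarrow> b\<in>Ar C \<Longrightarrow> c\<in>Ar C \<Longrightarrow> Dm C b = Cd C c \<Longrightarrow> Dm C c = Cd C a \<Longrightarrow>
  Cmp C b c = Idm C (Dm C c) \<Longrightarrow> Cmp C c a = Idm C (Cd C c) \<Longrightarrow> a = b"
proof -
  assume a: "a\<in>Ar C" "b\<in>Ar C" "c\<in>Ar C" "Dm C b = Cd C c" "Dm C c = Cd C a"
    "Cmp C b c = Idm C (Dm C c)" "Cmp C c a = Idm C (Cd C c)"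
  have "a = Cmp C (Idm C (Dm C c)) a" using a by simp
  also have "... = Cmp C (Cmp C b c) a" using a by simp
  also have "... = Cmp C b (Cmp C c a)" using a by (intro assoc) auto
  also have "... = Cmp C b (Idm C (Cd C c))" using a by simp
  also have "... = b" using a by simp
  finally show ?thesis .
qed

lemma slideA: "f\<in>Ar C \<Longrightarrow> g\<in>Ar C \<Longrightarrow> Cd C f = B \<Longrightarrow> Dm C g = E \<Longrightarrow>
  Cmp C (TnM C (Idm C B) g) (TnM C f (Idm C E)) = TnM C f g"
proof -
  assume a: "f\<in>Ar C" "g\<in>Ar C" "Cd C f = B" "Dm C g = E"
  have "Cmp C (TnM C (Idm C (Cd C f)) g) (TnM C f (Idm C (Dm C g))) = TnM C f g"
    using interchange[of f "Idm C (Cd C f)" "Idm C (Dm C g)" g] a(1,2) by simp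
  then show ?thesis using a by simp
qed
lemma slideB: "f\<in>Ar C \<Longrightarrow> g\<in>Ar C \<Longrightarrow> Cd C g = K \<Longrightarrow> Dm C f = A \<Longrightarrow>
  Cmp C (TnM C f (Idm C K)) (TnM C (Idm C A) g) = TnM C f g"
proof -
  assume a: "f\<in>Ar C" "g\<in>Ar C" "Cd C g = K" "Dm C f = A"
  have "Cmp C (TnM C f (Idm C (Cd C g))) (TnM C (Idm C (Dm C f)) g) = TnM C f g"
    using interchange[of "Idm C (Dm C f)" f g "Idm C (Cd C g)"] a(1,2) by simp
  then show ?thesis using a by simp
qed

end

locale func = C: smc C + D: smc D for C :: "('a,'b) moncat" and D :: "('c,'d) moncat" +
  fixes F :: "('a,'b,'c,'d) cmf" assumes isf: "is_functor C D F"
begin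
lemma Fo[simp]: "A\<in>Ob C \<Longrightarrow> cfo F A \<in> Ob D" using isf unfolding is_functor_def by blast
lemma Fm_hom: "f\<in>Ar C \<Longrightarrow> cfm F f \<in> hom D (cfo F (Dm C f)) (cfo F (Cd C f))"
proof -
  assume f: "f\<in>Ar C"
  then have "f \<in> hom C (Dm C f) (Cd C f)" by (simp add: hom_def)
  with f show ?thesis using isf unfolding is_functor_def by simp
qed
lemma Fm_Ar[simp]: "f\<in>Ar C \<Longrightarrow> cfm F f \<in> Ar D" using Fm_hom by (simp add: hom_def)
lemma Dm_Fm[simp]: "f\<in>Ar C \<Longrightarrow> Dm D (cfm F f) = cfo F (Dm C f)" using Fm_hom by (simp add: hom_def)
lemma Cd_Fm[simp]: "f\<in>Ar C \<Longrightarrow> Cd D (cfm F f) = cfo F (Cd C f)" using Fm_hom by (simp add: hom_def)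
lemma F_Idm[simp]: "A\<in>Ob C \<Longrightarrow> cfm F (Idm C A) = Idm D (cfo F A)" using isf unfolding is_functor_def by blast
lemma F_Cmp[simp]: "f\<in>Ar C \<Longrightarrow> g\<in>Ar C \<Longrightarrow> Dm C g = Cd C f \<Longrightarrow> cfm F (Cmp C g f) = Cmp D (cfm F g) (cfm F f)"
  using isf unfolding is_functor_def by blast
end

locale comon = func + assumes com: "comonoidal_functor C D F"
begin
lemma F2_hom: "X\<in>Ob C \<Longrightarrow> Y\<in>Ob C \<Longrightarrow> cf2 F X Y \<in> hom D (cfo F (Tn C X Y)) (Tn D (cfo F X) (cfo F Y))"
  using com unfolding comonoidal_functor_def by blast
lemma F2_Ar[simp]: "X\<in>Ob C \<Longrightarrow> Y\<in>Ob C \<Longrightarrow> cf2 F X Y \<in> Ar D" using F2_hom by (simp add: hom_def)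
lemma Dm_F2[simp]: "X\<in>Ob C \<Longrightarrow> Y\<in>Ob C \<Longrightarrow> Dm D (cf2 F X Y) = cfo F (Tn C X Y)" using F2_hom by (simp add: hom_def)
lemma Cd_F2[simp]: "X\<in>Ob C \<Longrightarrow> Y\<in>Ob C \<Longrightarrow> Cd D (cf2 F X Y) = Tn D (cfo F X) (cfo F Y)" using F2_hom by (simp add: hom_def)
lemma F0_hom: "cf0 F \<in> hom D (cfo F (UnitOb C)) (UnitOb D)"
  using com unfolding comonoidal_functor_def by blast
lemma F0_Ar[simp]: "cf0 F \<in> Ar D" using F0_hom by (simp add: hom_def)
lemma Dm_F0[simp]: "Dm D (cf0 F) = cfo F (UnitOb C)" using F0_hom by (simp add: hom_def)
lemma Cd_F0[simp]: "Cd D (cf0 F) = UnitOb D" using F0_hom by (simp add: hom_def)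
lemma F2_nat: "f\<in>Ar C \<Longrightarrow> g\<in>Ar C \<Longrightarrow>
   Cmp D (TnM D (cfm F f) (cfm F g)) (cf2 F (Dm C f) (Dm C g)) = Cmp D (cf2 F (Cd C f) (Cd C g)) (cfm F (TnM C f g))"
  using com unfolding comonoidal_functor_def by blast
lemma F2_nat_r: "w\<in>Ar C \<Longrightarrow> Dm C w = A \<Longrightarrow> X \<in> Ob C \<Longrightarrow>
  Cmp D (TnM D (cfm F w) (Idm D (cfo F X))) (cf2 F A X) = Cmp D (cf2 F (Cd C w) X) (cfm F (TnM C w (Idm C X)))"
  using F2_nat[of w "Idm C X"] by simp
lemma F2_nat_l: "w\<in>Ar C \<Longrightarrow> Dm C w = B \<Longrightarrow> A \<in> Ob C \<Longrightarrow>
  Cmp D (TnM D (Idm D (cfo F A)) (cfm F w)) (cf2 F A B) = Cmp D (cf2 F A (Cd C w)) (cfm F (TnM C (Idm C A) w))"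
  using F2_nat[of "Idm C A" w] by simp
lemma F2_nat_l': "w\<in>Ar C \<Longrightarrow> Cd C w = B \<Longrightarrow> A \<in> Ob C \<Longrightarrow>
  Cmp D (cf2 F A B) (cfm F (TnM C (Idm C A) w)) = Cmp D (TnM D (Idm D (cfo F A)) (cfm F w)) (cf2 F A (Dm C w))"
  using F2_nat[of "Idm C A" w] by simp
lemma F2_nat_r': "w\<in>Ar C \<Longrightarrow> Cd C w = B \<Longrightarrow> X \<in> Ob C \<Longrightarrow>
  Cmp D (cf2 F B X) (cfm F (TnM C w (Idm C X))) = Cmp D (TnM D (cfm F w) (Idm D (cfo F X))) (cf2 F (Dm C w) X)"
  using F2_nat[of w "Idm C X"] by simp
lemma coassoc: "X\<in>Ob C \<Longrightarrow> Y\<in>Ob C \<Longrightarrow> Z\<in>Ob C \<Longrightarrow> E = Tn C X Y \<Longrightarrow>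
  Cmp D (TnM D (cf2 F X Y) (Idm D (cfo F Z))) (cf2 F E Z)
        = Cmp D (TnM D (Idm D (cfo F X)) (cf2 F Y Z)) (cf2 F X (Tn C Y Z))"
  using com unfolding comonoidal_functor_def by blast
lemma counit_r: "X\<in>Ob C \<Longrightarrow> Cmp D (TnM D (Idm D (cfo F X)) (cf0 F)) (cf2 F X (UnitOb C)) = Idm D (cfo F X)"
  using com unfolding comonoidal_functor_def by blast
lemma counit_l: "X\<in>Ob C \<Longrightarrow> Cmp D (TnM D (cf0 F) (Idm D (cfo F X))) (cf2 F (UnitOb C) X) = Idm D (cfo F X)"
  using com unfolding comonoidal_functor_def by blast
end




lemma cc[simp]: "cfo (cmf_comp E G F) = (\<lambda>x. cfo G (cfo F x))" "cfm (cmf_comp E G F) = (\<lambda>x. cfm G (cfm F x))"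
  "cf2 (cmf_comp E G F) X Y = Cmp E (cf2 G (cfo F X) (cfo F Y)) (cfm G (cf2 F X Y))"
  "cf0 (cmf_comp E G F) = Cmp E (cf0 G) (cfm G (cf0 F))"
  "cfo (cmf_id C) = id" "cfm (cmf_id C) = id" "cf2 (cmf_id C) X Y = Idm C (Tn C X Y)" "cf0 (cmf_id C) = Idm C (UnitOb C)"
  by (simp_all add: cmf_comp_def cmf_id_def o_def)

locale setting =
  fixes C :: "('a,'b) moncat" and D :: "('c,'d) moncat"
    and F :: "('c,'d,'a,'b) cmf" and Finv2 :: "'c \<Rightarrow> 'c \<Rightarrow> 'b"
    and Fb :: "('a,'b,'c,'d) cmf" and \<eta> :: "'a \<Rightarrow> 'b" and \<epsilon> :: "'c \<Rightarrow> 'd"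
    and G :: "('c,'d,'c,'d) cmf"
  assumes A1: "strict_monoidal_category C" and A2: "strict_monoidal_category D"
    and A3: "comonoidal_functor D C F" and A4: "strong_with_inverse D C F Finv2"
    and A5: "comonoidal_functor C D Fb"
    and A6: "adjunction C D Fb F \<eta> \<epsilon>"
    and A7: "comonoidal_transformation C C (cmf_id C) (cmf_comp C F Fb) \<eta>"
    and A8: "comonoidal_transformation D D (cmf_comp D Fb F) (cmf_id D) \<epsilon>"
    and A9: "comonoidal_functor D D G"

sublocale setting \<subseteq> C: smc C using A1 by unfold_locales
sublocale setting \<subseteq> D: smc D using A2 by unfold_locales
sublocale setting \<subseteq> F: comon D C F using A1 A2 A3 by unfold_locales (auto simp: comonoidal_functor_def)
sublocale setting \<subseteq> Fb: comon C D Fb using A1 A2 A5 by unfold_locales (auto simp: comonoidal_functor_def)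
sublocale setting \<subseteq> G: comon D D G using A2 A9 by unfold_locales (auto simp: comonoidal_functor_def)

context setting begin

lemma eta_hom: "V\<in>Ob C \<Longrightarrow> \<eta> V \<in> hom C V (cfo F (cfo Fb V))"
  using A7 unfolding comonoidal_transformation_def nat_trans_def by simp
lemma eta_Ar[simp]: "V\<in>Ob C \<Longrightarrow> \<eta> V \<in> Ar C" using eta_hom by (simp add: hom_def)
lemma Dm_eta[simp]: "V\<in>Ob C \<Longrightarrow> Dm C (\<eta> V) = V" using eta_hom by (simp add: hom_def)
lemma Cd_eta[simp]: "V\<in>Ob C \<Longrightarrow> Cd C (\<eta> V) = cfo F (cfo Fb V)" using eta_hom by (simp add: hom_def)
lemma eta_nat: "v\<in>Ar C \<Longrightarrow> Cd C v = B \<Longrightarrow> Cmp C (\<eta> B) v = Cmp C (cfm F (cfm Fb v)) (\<eta> (Dm C v))"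
  using A7 unfolding comonoidal_transformation_def nat_trans_def by auto

lemma Finv2_props: "X\<in>Ob D \<Longrightarrow> Y\<in>Ob D \<Longrightarrow>
        Finv2 X Y \<in> hom C (Tn C (cfo F X) (cfo F Y)) (cfo F (Tn D X Y)) \<and>
        Cmp C (Finv2 X Y) (cf2 F X Y) = Idm C (cfo F (Tn D X Y)) \<and>
        Cmp C (cf2 F X Y) (Finv2 X Y) = Idm C (Tn C (cfo F X) (cfo F Y))"
  using A4 unfolding strong_with_inverse_def by blast
lemma Finv2_Ar[simp]: "X\<in>Ob D \<Longrightarrow> Y\<in>Ob D \<Longrightarrow> Finv2 X Y \<in> Ar C" using Finv2_props by (simp add: hom_def)
lemma Dm_Finv2[simp]: "X\<in>Ob D \<Longrightarrow> Y\<in>Ob D \<Longrightarrow> Dm C (Finv2 X Y) = Tn C (cfo F X) (cfo F Y)" using Finv2_props by (simp add: hom_def)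
lemma Cd_Finv2[simp]: "X\<in>Ob D \<Longrightarrow> Y\<in>Ob D \<Longrightarrow> Cd C (Finv2 X Y) = cfo F (Tn D X Y)" using Finv2_props by (simp add: hom_def)
lemma inv1[simp]: "X\<in>Ob D \<Longrightarrow> Y\<in>Ob D \<Longrightarrow> Cmp C (Finv2 X Y) (cf2 F X Y) = Idm C (cfo F (Tn D X Y))" using Finv2_props by blast
lemma inv2[simp]: "X\<in>Ob D \<Longrightarrow> Y\<in>Ob D \<Longrightarrow> Cmp C (cf2 F X Y) (Finv2 X Y) = Idm C (Tn C (cfo F X) (cfo F Y))" using Finv2_props by blast

lemma invr1: "X\<in>Ob D \<Longrightarrow> Y\<in>Ob D \<Longrightarrow> K\<in>Ob C \<Longrightarrow>
  Cmp C (TnM C (Finv2 X Y) (Idm C K)) (TnM C (cf2 F X Y) (Idm C K)) = Idm C (Tn C (cfo F (Tn D X Y)) K)"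
  by (simp flip: C.whisk_r)
lemma invr2: "X\<in>Ob D \<Longrightarrow> Y\<in>Ob D \<Longrightarrow> K\<in>Ob C \<Longrightarrow>
  Cmp C (TnM C (cf2 F X Y) (Idm C K)) (TnM C (Finv2 X Y) (Idm C K)) = Idm C (Tn C (Tn C (cfo F X) (cfo F Y)) K)"
  by (simp flip: C.whisk_r)
lemma invl1: "X\<in>Ob D \<Longrightarrow> Y\<in>Ob D \<Longrightarrow> K\<in>Ob C \<Longrightarrow>
  Cmp C (TnM C (Idm C K) (Finv2 X Y)) (TnM C (Idm C K) (cf2 F X Y)) = Idm C (Tn C K (cfo F (Tn D X Y)))"
  by (simp flip: C.whisk_l)
lemma invl2: "X\<in>Ob D \<Longrightarrow> Y\<in>Ob D \<Longrightarrow> K\<in>Ob C \<Longrightarrow>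
  Cmp C (TnM C (Idm C K) (cf2 F X Y)) (TnM C (Idm C K) (Finv2 X Y)) = Idm C (Tn C K (Tn C (cfo F X) (cfo F Y)))"
  by (simp flip: C.whisk_l)

lemmas invk[simp] = C.ctx_id[OF inv1] C.ctx_id[OF inv2] C.ctx_id[OF invr1] C.ctx_id[OF invr2]
  C.ctx_id[OF invl1] C.ctx_id[OF invl2]
lemmas [simp] = invr1 invr2 invl1 invl2

end


context setting begin

definition F0i where "F0i = (SOME g. g \<in> hom C (UnitOb C) (cfo F (UnitOb D)) \<and>
      Cmp C g (cf0 F) = Idm C (cfo F (UnitOb D)) \<and> Cmp C (cf0 F) g = Idm C (UnitOb C))"
lemma F0i_props: "F0i \<in> hom C (UnitOb C) (cfo F (UnitOb D)) \<and>
      Cmp C F0i (cf0 F) = Idm C (cfo F (UnitOb D)) \<and> Cmp C (cf0 F) F0i = Idm C (UnitOb C)"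
proof -
  have "iso C (cf0 F)" using A4 unfolding strong_with_inverse_def by blast
  then have "\<exists>g. g \<in> hom C (UnitOb C) (cfo F (UnitOb D)) \<and>
      Cmp C g (cf0 F) = Idm C (cfo F (UnitOb D)) \<and> Cmp C (cf0 F) g = Idm C (UnitOb C)"
    unfolding iso_def by auto
  then show ?thesis unfolding F0i_def by (rule someI_ex)
qed
lemma F0i_Ar[simp]: "F0i \<in> Ar C" using F0i_props by (simp add: hom_def)
lemma Dm_F0i[simp]: "Dm C F0i = UnitOb C" using F0i_props by (simp add: hom_def)
lemma Cd_F0i[simp]: "Cd C F0i = cfo F (UnitOb D)" using F0i_props by (simp add: hom_def)
lemma F0i_1[simp]: "Cmp C F0i (cf0 F) = Idm C (cfo F (UnitOb D))" using F0i_props by blast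
lemma F0i_2[simp]: "Cmp C (cf0 F) F0i = Idm C (UnitOb C)" using F0i_props by blast

lemma eta2: "V\<in>Ob C \<Longrightarrow> W\<in>Ob C \<Longrightarrow> Cmp C (cfm F (cf2 Fb V W)) (\<eta> (Tn C V W))
   = Cmp C (Finv2 (cfo Fb V) (cfo Fb W)) (TnM C (\<eta> V) (\<eta> W))"
proof -
  assume a: "V\<in>Ob C" "W\<in>Ob C"
  have e: "TnM C (\<eta> V) (\<eta> W) = Cmp C (cf2 F (cfo Fb V) (cfo Fb W)) (Cmp C (cfm F (cf2 Fb V W)) (\<eta> (Tn C V W)))"
    using A7 a unfolding comonoidal_transformation_def by simp
  show ?thesis using a by (simp add: e)
qed

lemma eta0: "Cmp C (cfm F (cf0 Fb)) (\<eta> (UnitOb C)) = F0i"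
proof -
  have e: "Cmp C (cf0 F) (Cmp C (cfm F (cf0 Fb)) (\<eta> (UnitOb C))) = Idm C (UnitOb C)"
    using A7 unfolding comonoidal_transformation_def by simp
  have "Cmp C (cfm F (cf0 Fb)) (\<eta> (UnitOb C)) = Cmp C F0i (Cmp C (cf0 F) (Cmp C (cfm F (cf0 Fb)) (\<eta> (UnitOb C))))"
    by (simp add: C.ctx_id[OF F0i_1])
  also have "... = F0i" by (simp add: e)
  finally show ?thesis .
qed

lemma eta2w: "K\<in>Ob C \<Longrightarrow> V\<in>Ob C \<Longrightarrow> W\<in>Ob C \<Longrightarrow>
  Cmp C (TnM C (Idm C K) (cfm F (cf2 Fb V W))) (TnM C (Idm C K) (\<eta> (Tn C V W)))
   = Cmp C (TnM C (Idm C K) (Finv2 (cfo Fb V) (cfo Fb W))) (TnM C (Idm C K) (TnM C (\<eta> V) (\<eta> W)))"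
  by (simp add: eta2 flip: C.whisk_l)
lemma eta0w: "K\<in>Ob C \<Longrightarrow>
  Cmp C (TnM C (Idm C K) (cfm F (cf0 Fb))) (TnM C (Idm C K) (\<eta> (UnitOb C))) = TnM C (Idm C K) F0i"
  by (simp add: eta0 flip: C.whisk_l)
lemma etaw: "v\<in>Ar C \<Longrightarrow> Cd C v = B \<Longrightarrow> K\<in>Ob C \<Longrightarrow>
  Cmp C (TnM C (Idm C K) (\<eta> B)) (TnM C (Idm C K) v) = Cmp C (TnM C (Idm C K) (cfm F (cfm Fb v))) (TnM C (Idm C K) (\<eta> (Dm C v)))"
  using C.Cd_Ob[of v] by (simp add: eta_nat flip: C.whisk_l)

lemma Finv2_nat_l: "w\<in>Ar D \<Longrightarrow> Cd D w = B \<Longrightarrow> A\<in>Ob D \<Longrightarrow>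
  Cmp C (Finv2 A B) (TnM C (Idm C (cfo F A)) (cfm F w)) = Cmp C (cfm F (TnM D (Idm D A) w)) (Finv2 A (Dm D w))"
proof -
  assume a: "w\<in>Ar D" "Cd D w = B" "A\<in>Ob D"
  have b: "B \<in> Ob D" using a D.Cd_Ob[of w] by simp
  have "Cmp C (cfm F (TnM D (Idm D A) w)) (Finv2 A (Dm D w)) =
     Cmp C (Finv2 A B) (Cmp C (cf2 F A B) (Cmp C (cfm F (TnM D (Idm D A) w)) (Finv2 A (Dm D w))))"
    using a b by simp
  also have "... = Cmp C (Finv2 A B) (TnM C (Idm C (cfo F A)) (cfm F w))"
    using a b by (simp add: C.ctx[OF F.F2_nat_l'])
  finally show ?thesis by simp
qed
lemma Finv2_nat_r: "w\<in>Ar D \<Longrightarrow> Cd D w = A \<Longrightarrow> B\<in>Ob D \<Longrightarrow>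
  Cmp C (Finv2 A B) (TnM C (cfm F w) (Idm C (cfo F B))) = Cmp C (cfm F (TnM D w (Idm D B))) (Finv2 (Dm D w) B)"
proof -
  assume a: "w\<in>Ar D" "Cd D w = A" "B\<in>Ob D"
  have b: "A \<in> Ob D" using a D.Cd_Ob[of w] by simp
  have "Cmp C (cfm F (TnM D w (Idm D B))) (Finv2 (Dm D w) B) =
     Cmp C (Finv2 A B) (Cmp C (cf2 F A B) (Cmp C (cfm F (TnM D w (Idm D B))) (Finv2 (Dm D w) B)))"
    using a b by simp
  also have "... = Cmp C (Finv2 A B) (TnM C (cfm F w) (Idm C (cfo F B)))"
    using a b by (simp add: C.ctx[OF F.F2_nat_r'])
  finally show ?thesis by simp
qed
lemma Finv2_nat_l': "w\<in>Ar D \<Longrightarrow> Dm D w = B \<Longrightarrow> A\<in>Ob D \<Longrightarrow>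
  Cmp C (cfm F (TnM D (Idm D A) w)) (Finv2 A B) = Cmp C (Finv2 A (Cd D w)) (TnM C (Idm C (cfo F A)) (cfm F w))"
  using Finv2_nat_l[of w "Cd D w" A] by simp
lemma Finv2_nat_r': "w\<in>Ar D \<Longrightarrow> Dm D w = A \<Longrightarrow> B\<in>Ob D \<Longrightarrow>
  Cmp C (cfm F (TnM D w (Idm D B))) (Finv2 A B) = Cmp C (Finv2 (Cd D w) B) (TnM C (cfm F w) (Idm C (cfo F B)))"
  using Finv2_nat_r[of w "Cd D w" B] by simp

lemma Finv_coassoc: "A\<in>Ob D \<Longrightarrow> B\<in>Ob D \<Longrightarrow> E\<in>Ob D \<Longrightarrow>
  Cmp C (Finv2 A (Tn D B E)) (TnM C (Idm C (cfo F A)) (Finv2 B E))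
   = Cmp C (Finv2 (Tn D A B) E) (TnM C (Finv2 A B) (Idm C (cfo F E)))"
proof -
  assume a: "A\<in>Ob D" "B\<in>Ob D" "E\<in>Ob D"
  have c: "Cmp C (TnM C (cf2 F A B) (Idm C (cfo F E))) (cf2 F (Tn D A B) E)
        = Cmp C (TnM C (Idm C (cfo F A)) (cf2 F B E)) (cf2 F A (Tn D B E))"
    using a by (rule F.coassoc) simp
  show ?thesis
  proof (rule C.inverse_unique[where c = "Cmp C (TnM C (cf2 F A B) (Idm C (cfo F E))) (cf2 F (Tn D A B) E)"])
    show "Cmp C (Cmp C (Finv2 (Tn D A B) E) (TnM C (Finv2 A B) (Idm C (cfo F E))))
     (Cmp C (TnM C (cf2 F A B) (Idm C (cfo F E))) (cf2 F (Tn D A B) E)) =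
    Idm C (Dm C (Cmp C (TnM C (cf2 F A B) (Idm C (cfo F E))) (cf2 F (Tn D A B) E)))"
      using a by simp
    show "Cmp C (Cmp C (TnM C (cf2 F A B) (Idm C (cfo F E))) (cf2 F (Tn D A B) E))
     (Cmp C (Finv2 A (Tn D B E)) (TnM C (Idm C (cfo F A)) (Finv2 B E))) =
    Idm C (Cd C (Cmp C (TnM C (cf2 F A B) (Idm C (cfo F E))) (cf2 F (Tn D A B) E)))"
      unfolding c using a by simp
  qed (use a in simp_all)
qed

lemma mixed: "A\<in>Ob D \<Longrightarrow> B\<in>Ob D \<Longrightarrow> E\<in>Ob D \<Longrightarrow>
  Cmp C (cf2 F A (Tn D B E)) (Finv2 (Tn D A B) E)
   = Cmp C (TnM C (Idm C (cfo F A)) (Finv2 B E)) (TnM C (cf2 F A B) (Idm C (cfo F E)))"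
proof -
  assume a: "A\<in>Ob D" "B\<in>Ob D" "E\<in>Ob D"
  have c: "Cmp C (TnM C (Idm C (cfo F A)) (cf2 F B E)) (cf2 F A (Tn D B E))
     = Cmp C (TnM C (cf2 F A B) (Idm C (cfo F E))) (cf2 F (Tn D A B) E)"
    using a by (rule F.coassoc[symmetric]) simp
  have "Cmp C (cf2 F A (Tn D B E)) (Finv2 (Tn D A B) E) =
     Cmp C (TnM C (Idm C (cfo F A)) (Finv2 B E)) (Cmp C (TnM C (Idm C (cfo F A)) (cf2 F B E))
        (Cmp C (cf2 F A (Tn D B E)) (Finv2 (Tn D A B) E)))"
    using a by simp
  also have "... = Cmp C (TnM C (Idm C (cfo F A)) (Finv2 B E)) (Cmp C (TnM C (cf2 F A B) (Idm C (cfo F E)))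
        (Cmp C (cf2 F (Tn D A B) E) (Finv2 (Tn D A B) E)))"
    using a by (subst C.ctx[OF c]) simp_all
  also have "... = Cmp C (TnM C (Idm C (cfo F A)) (Finv2 B E)) (TnM C (cf2 F A B) (Idm C (cfo F E)))"
    using a by simp
  finally show ?thesis .
qed

lemma Finv2_unit: "X\<in>Ob D \<Longrightarrow> Cmp C (Finv2 X (UnitOb D)) (TnM C (Idm C (cfo F X)) F0i) = Idm C (cfo F X)"
proof -
  assume a: "X\<in>Ob D"
  have "Finv2 X (UnitOb D) = TnM C (Idm C (cfo F X)) (cf0 F)"
    apply (rule C.inverse_unique[where c = "cf2 F X (UnitOb D)"])
    using a F.counit_r[of X] by simp_all
  then show ?thesis using a by (simp flip: C.whisk_l)
qed

end


context setting begin

lemma hb_X: "lax_half_braiding D G X \<gamma> \<Longrightarrow> X \<in> Ob D" unfolding lax_half_braiding_def by blast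
lemma hb_hom: "lax_half_braiding D G X \<gamma> \<Longrightarrow> V\<in>Ob D \<Longrightarrow> \<gamma> V \<in> hom D (Tn D X V) (Tn D (cfo G V) X)"
  unfolding lax_half_braiding_def by blast
lemma hb_Ar: "lax_half_braiding D G X \<gamma> \<Longrightarrow> V\<in>Ob D \<Longrightarrow> \<gamma> V \<in> Ar D" using hb_hom by (simp add: hom_def)
lemma hb_Dm: "lax_half_braiding D G X \<gamma> \<Longrightarrow> V\<in>Ob D \<Longrightarrow> Dm D (\<gamma> V) = Tn D X V" using hb_hom by (simp add: hom_def)
lemma hb_Cd: "lax_half_braiding D G X \<gamma> \<Longrightarrow> V\<in>Ob D \<Longrightarrow> Cd D (\<gamma> V) = Tn D (cfo G V) X" using hb_hom by (simp add: hom_def)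

lemma hb_nat: "lax_half_braiding D G X \<gamma> \<Longrightarrow> v\<in>Ar D \<Longrightarrow>
   Cmp D (\<gamma> (Cd D v)) (TnM D (Idm D X) v) = Cmp D (TnM D (cfm G v) (Idm D X)) (\<gamma> (Dm D v))"
  unfolding lax_half_braiding_def by blast

lemma Fg_nat1: assumes hb: "lax_half_braiding D G X \<gamma>" shows "w\<in>Ar D \<Longrightarrow> Dm D w = A \<Longrightarrow>
  Cmp C (cfm F (TnM D (cfm G w) (Idm D X))) (cfm F (\<gamma> A)) = Cmp C (cfm F (\<gamma> (Cd D w))) (cfm F (TnM D (Idm D X) w))"
proof -
  assume a: "w\<in>Ar D" "Dm D w = A"
  note h = hb_X[OF hb] hb_Ar[OF hb] hb_Dm[OF hb] hb_Cd[OF hb]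
  show ?thesis using arg_cong[OF hb_nat[OF hb a(1)], of "cfm F"] a h D.Dm_Ob[of w] D.Cd_Ob[of w] by simp
qed

lemma Fg_nat2: assumes hb: "lax_half_braiding D G X \<gamma>" shows "w\<in>Ar D \<Longrightarrow> Cd D w = B \<Longrightarrow>
  Cmp C (cfm F (\<gamma> B)) (cfm F (TnM D (Idm D X) w)) = Cmp C (cfm F (TnM D (cfm G w) (Idm D X))) (cfm F (\<gamma> (Dm D w)))"
proof -
  assume a: "w\<in>Ar D" "Cd D w = B"
  note h = hb_X[OF hb] hb_Ar[OF hb] hb_Dm[OF hb] hb_Cd[OF hb]
  show ?thesis using arg_cong[OF hb_nat[OF hb a(1), symmetric], of "cfm F"] a h D.Dm_Ob[of w] D.Cd_Ob[of w] by simp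
qed

lemma Fg_mult: assumes hb: "lax_half_braiding D G X \<gamma>" shows "A\<in>Ob D \<Longrightarrow> B\<in>Ob D \<Longrightarrow>
  Cmp C (cfm F (TnM D (cf2 G A B) (Idm D X))) (cfm F (\<gamma> (Tn D A B)))
   = Cmp C (cfm F (TnM D (Idm D (cfo G A)) (\<gamma> B))) (cfm F (TnM D (\<gamma> A) (Idm D B)))"
proof -
  assume a: "A\<in>Ob D" "B\<in>Ob D"
  note h = hb_X[OF hb] hb_Ar[OF hb] hb_Dm[OF hb] hb_Cd[OF hb]
  have e: "Cmp D (TnM D (cf2 G A B) (Idm D X)) (\<gamma> (Tn D A B))
        = Cmp D (TnM D (Idm D (cfo G A)) (\<gamma> B)) (TnM D (\<gamma> A) (Idm D B))"
    using hb a unfolding lax_half_braiding_def by blast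
  show ?thesis using arg_cong[OF e, of "cfm F"] a h D.Dm_Ob[of w] D.Cd_Ob[of w] by simp
qed

lemma Fg_unit: assumes hb: "lax_half_braiding D G X \<gamma>" shows
  "Cmp C (cfm F (TnM D (cf0 G) (Idm D X))) (cfm F (\<gamma> (UnitOb D))) = Idm C (cfo F X)"
proof -
  note h = hb_X[OF hb] hb_Ar[OF hb] hb_Dm[OF hb] hb_Cd[OF hb]
  have e: "Cmp D (TnM D (cf0 G) (Idm D X)) (\<gamma> (UnitOb D)) = Idm D X"
    using hb unfolding lax_half_braiding_def by blast
  show ?thesis using arg_cong[OF e, of "cfm F"] h by simp
qed

lemma Fmor: assumes hb1: "lax_half_braiding D G X1 \<gamma>1" and hb2: "lax_half_braiding D G X2 \<gamma>2"
  and m: "lax_Z_mor D G X1 \<gamma>1 X2 \<gamma>2 f" shows "V\<in>Ob D \<Longrightarrow>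
  Cmp C (cfm F (TnM D (Idm D (cfo G V)) f)) (cfm F (\<gamma>1 V)) = Cmp C (cfm F (\<gamma>2 V)) (cfm F (TnM D f (Idm D V)))"
proof -
  assume a: "V\<in>Ob D"
  note h = hb_X[OF hb1] hb_Ar[OF hb1] hb_Dm[OF hb1] hb_Cd[OF hb1] hb_X[OF hb2] hb_Ar[OF hb2] hb_Dm[OF hb2] hb_Cd[OF hb2]
  have f: "f \<in> Ar D" "Dm D f = X1" "Cd D f = X2" using m unfolding lax_Z_mor_def hom_def by auto
  have e: "Cmp D (TnM D (Idm D (cfo G V)) f) (\<gamma>1 V) = Cmp D (\<gamma>2 V) (TnM D f (Idm D V))"
    using m a unfolding lax_Z_mor_def by blast
  show ?thesis using arg_cong[OF e, of "cfm F"] a h f by simp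
qed

end



lemma (in smc) slide_eq: "f\<in>Ar C \<Longrightarrow> g\<in>Ar C \<Longrightarrow> Cd C f = B \<Longrightarrow> Dm C g = E \<Longrightarrow>
  Cmp C (TnM C (Idm C B) g) (TnM C f (Idm C E)) = Cmp C (TnM C f (Idm C (Cd C g))) (TnM C (Idm C (Dm C f)) g)"
  using slideA[of f g B E] slideB[of f g "Cd C g" "Dm C f"] by simp

lemma (in smc) slide_end: "f\<in>Ar C \<Longrightarrow> g\<in>Ar C \<Longrightarrow> A\<in>Ob C \<Longrightarrow> Cd C f = B \<Longrightarrow> Dm C g = E \<Longrightarrow>
  Cmp C (TnM C (Idm C (Tn C A B)) g) (TnM C (Idm C A) (TnM C f (Idm C E))) = TnM C (Idm C A) (TnM C f g)"
proof -
  assume a: "f\<in>Ar C" "g\<in>Ar C" "A\<in>Ob C" "Cd C f = B" "Dm C g = E"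
  have b: "B \<in> Ob C" "E \<in> Ob C" using a Cd_Ob[of f] Dm_Ob[of g] by auto
  have "TnM C (Idm C (Tn C A B)) g = TnM C (Idm C A) (TnM C (Idm C B) g)"
    using a b TnM_assoc[of "Idm C A" "Idm C B" g] by simp
  then have "Cmp C (TnM C (Idm C (Tn C A B)) g) (TnM C (Idm C A) (TnM C f (Idm C E)))
     = TnM C (Idm C A) (Cmp C (TnM C (Idm C B) g) (TnM C f (Idm C E)))"
    using a b by (simp del: idmerge)
  also have "... = TnM C (Idm C A) (TnM C f g)" using a b slideA[of f g B E] by simp
  finally show ?thesis .
qed
context setting begin

lemma ig_unf: "induced_gamma C F Finv2 Fb G \<eta> X \<gamma> V = Cmp C (cf2 F (cfo G (cfo Fb V)) X)
       (Cmp C (cfm F (\<gamma> (cfo Fb V)))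
          (Cmp C (Finv2 X (cfo Fb V)) (TnM C (Idm C (cfo F X)) (\<eta> V))))"
  by (simp add: induced_gamma_def)

lemma nat_part: assumes hb: "lax_half_braiding D G X \<gamma>" and v: "v \<in> Ar C"
  shows "Cmp C (induced_gamma C F Finv2 Fb G \<eta> X \<gamma> (Cd C v)) (TnM C (Idm C (cfo F X)) v)
    = Cmp C (TnM C (cfm (cmf_comp C F (cmf_comp D G Fb)) v) (Idm C (cfo F X))) (induced_gamma C F Finv2 Fb G \<eta> X \<gamma> (Dm C v))"
proof -
  note h = hb_X[OF hb] hb_Ar[OF hb] hb_Dm[OF hb] hb_Cd[OF hb]
  show ?thesis using v h C.Dm_Ob[of v] C.Cd_Ob[of v]
    by (simp add: ig_unf etaw C.ctx[OF Finv2_nat_l] Finv2_nat_l C.ctx[OF Fg_nat2[OF hb]] Fg_nat2[OF hb]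
       C.ctx[OF F.F2_nat_r] F.F2_nat_r)
qed

lemma mult_part: assumes hb: "lax_half_braiding D G X \<gamma>" and V: "V \<in> Ob C" and W: "W \<in> Ob C"
  shows "Cmp C (TnM C (cf2 (cmf_comp C F (cmf_comp D G Fb)) V W) (Idm C (cfo F X))) (induced_gamma C F Finv2 Fb G \<eta> X \<gamma> (Tn C V W))
    = Cmp C (TnM C (Idm C (cfo (cmf_comp C F (cmf_comp D G Fb)) V)) (induced_gamma C F Finv2 Fb G \<eta> X \<gamma> W))
        (TnM C (induced_gamma C F Finv2 Fb G \<eta> X \<gamma> V) (Idm C W))"
proof -
  note h = hb_X[OF hb] hb_Ar[OF hb] hb_Dm[OF hb] hb_Cd[OF hb]
  show ?thesis using V W h
    by (simp add: ig_unf C.ctx[OF F.F2_nat_r] F.F2_nat_r C.ctx[OF Fg_nat1[OF hb]] Fg_nat1[OF hb]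
      C.ctx[OF Fg_mult[OF hb]] Fg_mult[OF hb] C.ctx[OF F.coassoc] F.coassoc C.ctx[OF F.F2_nat_l'] F.F2_nat_l'
      C.ctx[OF Finv2_nat_l'] Finv2_nat_l' eta2w C.ctx[OF Finv_coassoc] Finv_coassoc
      C.ctx[OF Finv2_nat_r'] Finv2_nat_r' C.ctx[OF mixed] mixed C.ctx[OF C.slide_eq] C.slide_end)
qed

lemma unit_part: assumes hb: "lax_half_braiding D G X \<gamma>"
  shows "Cmp C (TnM C (cf0 (cmf_comp C F (cmf_comp D G Fb))) (Idm C (cfo F X))) (induced_gamma C F Finv2 Fb G \<eta> X \<gamma> (UnitOb C))
    = Idm C (cfo F X)"
proof -
  note h = hb_X[OF hb] hb_Ar[OF hb] hb_Dm[OF hb] hb_Cd[OF hb]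
  show ?thesis using h
    by (simp add: ig_unf C.ctx[OF F.F2_nat_r] F.F2_nat_r C.ctx_id[OF F.counit_l] F.counit_l
      C.ctx[OF Fg_nat1[OF hb]] Fg_nat1[OF hb] C.ctx_id[OF Fg_unit[OF hb]] Fg_unit[OF hb]
      C.ctx[OF Finv2_nat_l'] Finv2_nat_l' eta0w Finv2_unit)
qed

lemma typ_part: assumes hb: "lax_half_braiding D G X \<gamma>" and V: "V \<in> Ob C"
  shows "induced_gamma C F Finv2 Fb G \<eta> X \<gamma> V \<in> hom C (Tn C (cfo F X) V) (Tn C (cfo (cmf_comp C F (cmf_comp D G Fb)) V) (cfo F X))"
proof -
  note h = hb_X[OF hb] hb_Ar[OF hb] hb_Dm[OF hb] hb_Cd[OF hb]
  show ?thesis using h V by (simp add: ig_unf hom_def)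
qed

lemma hb_result: assumes hb: "lax_half_braiding D G X \<gamma>"
  shows "lax_half_braiding C (cmf_comp C F (cmf_comp D G Fb)) (cfo F X) (induced_gamma C F Finv2 Fb G \<eta> X \<gamma>)"
  unfolding lax_half_braiding_def
  using hb_X[OF hb] typ_part[OF hb] nat_part[OF hb] mult_part[OF hb] unit_part[OF hb] by simp

lemma mor_part: assumes hb1: "lax_half_braiding D G X1 \<gamma>1" and hb2: "lax_half_braiding D G X2 \<gamma>2"
  and m: "lax_Z_mor D G X1 \<gamma>1 X2 \<gamma>2 f"
  shows "lax_Z_mor C (cmf_comp C F (cmf_comp D G Fb))
          (cfo F X1) (induced_gamma C F Finv2 Fb G \<eta> X1 \<gamma>1)
          (cfo F X2) (induced_gamma C F Finv2 Fb G \<eta> X2 \<gamma>2) (cfm F f)"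
proof -
  note h = hb_X[OF hb1] hb_Ar[OF hb1] hb_Dm[OF hb1] hb_Cd[OF hb1] hb_X[OF hb2] hb_Ar[OF hb2] hb_Dm[OF hb2] hb_Cd[OF hb2]
  have f: "f \<in> Ar D" "Dm D f = X1" "Cd D f = X2" using m unfolding lax_Z_mor_def hom_def by auto
  show ?thesis unfolding lax_Z_mor_def
  proof (intro conjI ballI)
    show "cfm F f \<in> hom C (cfo F X1) (cfo F X2)" using f by (simp add: hom_def)
  next
    fix V assume V: "V \<in> Ob C"
    show "Cmp C (TnM C (Idm C (cfo (cmf_comp C F (cmf_comp D G Fb)) V)) (cfm F f)) (induced_gamma C F Finv2 Fb G \<eta> X1 \<gamma>1 V) =
         Cmp C (induced_gamma C F Finv2 Fb G \<eta> X2 \<gamma>2 V) (TnM C (cfm F f) (Idm C V))"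
      using h f V
      by (simp add: ig_unf C.ctx[OF F.F2_nat_l] F.F2_nat_l C.ctx[OF Fmor[OF hb1 hb2 m]] Fmor[OF hb1 hb2 m]
        C.ctx[OF Finv2_nat_r'] Finv2_nat_r' C.slideA C.slideB)
  qed
qed

end

theorem mainTheorem2:
  fixes C :: "('a,'b) moncat" and D :: "('c,'d) moncat"
    and F :: "('c,'d,'a,'b) cmf" and Finv2 :: "'c \<Rightarrow> 'c \<Rightarrow> 'b"
    and Fb :: "('a,'b,'c,'d) cmf" and \<eta> :: "'a \<Rightarrow> 'b" and \<epsilon> :: "'c \<Rightarrow> 'd"
    and G :: "('c,'d,'c,'d) cmf"
  assumes "strict_monoidal_category C" and "strict_monoidal_category D"
    and "comonoidal_functor D C F" and "strong_with_inverse D C F Finv2"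
    and "comonoidal_functor C D Fb"
    and "adjunction C D Fb F \<eta> \<epsilon>"
    and "comonoidal_transformation C C (cmf_id C) (cmf_comp C F Fb) \<eta>"
    and "comonoidal_transformation D D (cmf_comp D Fb F) (cmf_id D) \<epsilon>"
    and "comonoidal_functor D D G"
  shows
    "(\<forall>X \<gamma>. lax_half_braiding D G X \<gamma> \<longrightarrow>
        lax_half_braiding C (cmf_comp C F (cmf_comp D G Fb)) (cfo F X)
          (induced_gamma C F Finv2 Fb G \<eta> X \<gamma>)) \<and>
     (\<forall>X1 \<gamma>1 X2 \<gamma>2 f. lax_half_braiding D G X1 \<gamma>1 \<longrightarrow> lax_half_braiding D G X2 \<gamma>2 \<longrightarrow>
        lax_Z_mor D G X1 \<gamma>1 X2 \<gamma>2 f \<longrightarrow>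
        lax_Z_mor C (cmf_comp C F (cmf_comp D G Fb))
          (cfo F X1) (induced_gamma C F Finv2 Fb G \<eta> X1 \<gamma>1)
          (cfo F X2) (induced_gamma C F Finv2 Fb G \<eta> X2 \<gamma>2) (cfm F f)) \<and>
     (\<forall>X \<gamma>. lax_half_braiding D G X \<gamma> \<longrightarrow> cfm F (Idm D X) = Idm C (cfo F X)) \<and>
     (\<forall>X1 \<gamma>1 X2 \<gamma>2 X3 \<gamma>3 f g.
        lax_half_braiding D G X1 \<gamma>1 \<longrightarrow> lax_half_braiding D G X2 \<gamma>2 \<longrightarrow>
        lax_half_braiding D G X3 \<gamma>3 \<longrightarrow>
        lax_Z_mor D G X1 \<gamma>1 X2 \<gamma>2 f \<longrightarrow> lax_Z_mor D G X2 \<gamma>2 X3 \<gamma>3 g \<longrightarrow>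
        cfm F (Cmp D g f) = Cmp C (cfm F g) (cfm F f))"
proof -
  interpret setting C D F Finv2 Fb \<eta> \<epsilon> G using assms by unfold_locales
  show ?thesis
  proof (intro conjI allI impI)
    fix X \<gamma> assume "lax_half_braiding D G X \<gamma>"
    then show "lax_half_braiding C (cmf_comp C F (cmf_comp D G Fb)) (cfo F X) (induced_gamma C F Finv2 Fb G \<eta> X \<gamma>)"
      by (rule hb_result)
  next
    fix X1 \<gamma>1 X2 \<gamma>2 f assume "lax_half_braiding D G X1 \<gamma>1" "lax_half_braiding D G X2 \<gamma>2" "lax_Z_mor D G X1 \<gamma>1 X2 \<gamma>2 f"
    then show "lax_Z_mor C (cmf_comp C F (cmf_comp D G Fb))
          (cfo F X1) (induced_gamma C F Finv2 Fb G \<eta> X1 \<gamma>1)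
          (cfo F X2) (induced_gamma C F Finv2 Fb G \<eta> X2 \<gamma>2) (cfm F f)" by (rule mor_part)
  next
    fix X \<gamma> assume "lax_half_braiding D G X \<gamma>"
    then show "cfm F (Idm D X) = Idm C (cfo F X)" using hb_X by simp
  next
    fix X1 \<gamma>1 X2 \<gamma>2 X3 \<gamma>3 f g
    assume "lax_Z_mor D G X1 \<gamma>1 X2 \<gamma>2 f" "lax_Z_mor D G X2 \<gamma>2 X3 \<gamma>3 g"
    then show "cfm F (Cmp D g f) = Cmp C (cfm F g) (cfm F f)" unfolding lax_Z_mor_def hom_def by simp
  qed
qed


end
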